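(* Let $q$ be an odd prime power, $n$ a positive integer with $n\mid(q-1)$, $\lambda\in\mathbb{F}_q^{*}$ with multiplicative order dividing $\frac{q-1}{n}$, and let $\alpha_1,\dots,\alpha_n\in\mathbb{F}_q^{*}$ be the (pairwise distinct) roots of $x^n-\lambda$, i.e. $x^n-\lambda=\prod_{i=1}^n(x-\alpha_i)$, in some fixed order. Let $\ell\ge0$, $\boldsymbol\eta=(\eta_0,\dots,\eta_\ell)\in\mathbb{F}_q^{\ell+1}\setminus\{\boldsymbol0\}$, let $r$ be an integer with $0\le r\le\ell$, and let $k=\frac{n-\ell-r}{2}$ be an integer with $k\ge2$. Let $\boldsymbol v=(v_1,\dots,v_n)$ with $v_i\in\{-1,1\}$ for $1\le i\le n-k+1$ and $v_i\in\mathbb{F}_q\setminus\{-1,0,1\}$ for $n-k+2\le i\le n$. Suppose $$1+\sum_{t=r}^{\ell}\eta_t\,\Phi_{\ell+1+r-t}\neq0,\qquad\text{where }\Phi_i=(-1)^{n-1}P\,\Omega_i\ (1\le i\le\ell+1).$$ Then the $( * )$-$(\mathcal{L},\mathcal{P})$-TGRS code $\mathcal{C}$ is an LCD code, i.e. $\mathcal{C}\cap\mathcal{C}^{\perp}=\{\boldsymbol0\}$.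
   Context: $P=\prod_{i=1}^n\alpha_i$. For an integer $t$, $S_t(x_1,\dots,x_n)$ is the complete homogeneous symmetric polynomial of degree $t$ ($S_t=0$ for $t<0$, $S_0=1$, and $S_t=\sum_{t_1+\dots+t_n=t,\,t_i\ge0}x_1^{t_1}\cdots x_n^{t_n}$ for $t\ge0$), and $\Omega_i=\sum_{t=0}^{\ell}\eta_tS_{t+1-i}(\alpha_1,\dots,\alpha_n)$. The $( * )$-$(\mathcal{L},\mathcal{P})$-TGRS code is $\mathcal{C}=\{(v_1f(\alpha_1),\dots,v_nf(\alpha_n)) : f\in\mathcal{F}_{n,k,\boldsymbol\eta}\}$, where $\mathcal{F}_{n,k,\boldsymbol\eta}=\{\sum_{i=0}^{k-1}f_ix^i+f_0\sum_{j=0}^{\ell}\eta_jx^{k+j} : f_i\in\mathbb{F}_q\}$. $\mathcal{C}^{\perp}$ is the dual with respect to the standard inner product $\sum_i x_iy_i$. *)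

theory Defs
  imports "HOL-Computational_Algebra.Polynomial"
begin

definition complete_hom :: "int \<Rightarrow> nat \<Rightarrow> (nat \<Rightarrow> 'a::comm_ring_1) \<Rightarrow> 'a" where
  "complete_hom t n x =
     (if t < 0 then 0 else
      (\<Sum>e\<in>{e::nat\<Rightarrow>nat. (\<forall>i. i \<notin> {1..n} \<longrightarrow> e i = 0) \<and> (\<Sum>i=1..n. e i) = nat t}.
          \<Prod>i=1..n. x i ^ e i))"

definition Omega :: "nat \<Rightarrow> nat \<Rightarrow> (nat \<Rightarrow> 'a::comm_ring_1) \<Rightarrow> (nat \<Rightarrow> 'a) \<Rightarrow> int \<Rightarrow> 'a" where
  "Omega n l alpha eta i = (\<Sum>t=0..l. eta t * complete_hom (int t + 1 - i) n alpha)"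

definition tgrs_polys :: "nat \<Rightarrow> nat \<Rightarrow> (nat \<Rightarrow> 'a::comm_ring_1) \<Rightarrow> 'a poly set" where
  "tgrs_polys k l eta =
     {(\<Sum>i<k. monom (fc i) i) + smult (fc 0) (\<Sum>j=0..l. monom (eta j) (k + j)) | fc. True}"

text \<open>Codewords are vectors of length n, represented as functions on {1..n}
  (zero outside {1..n}).\<close>
definition tgrs_code :: "nat \<Rightarrow> nat \<Rightarrow> nat \<Rightarrow> (nat \<Rightarrow> 'a::comm_ring_1) \<Rightarrow> (nat \<Rightarrow> 'a)
    \<Rightarrow> (nat \<Rightarrow> 'a) \<Rightarrow> (nat \<Rightarrow> 'a) set" where
  "tgrs_code n k l eta alpha v =
     {(\<lambda>i. if i \<in> {1..n} then v i * poly f (alpha i) else 0) | f. f \<in> tgrs_polys k l eta}"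

definition dual_code :: "nat \<Rightarrow> (nat \<Rightarrow> 'a::comm_ring_1) set \<Rightarrow> (nat \<Rightarrow> 'a) set" where
  "dual_code n C = {y. (\<forall>i. i \<notin> {1..n} \<longrightarrow> y i = 0) \<and> (\<forall>c\<in>C. (\<Sum>i=1..n. c i * y i) = 0)}"

end

theory Submission
  imports Defs "HOL-Computational_Algebra.Computational_Algebra"
begin


definition Eset :: "nat \<Rightarrow> nat \<Rightarrow> (nat \<Rightarrow> nat) set" where
  "Eset n m = {e. (\<forall>i. i \<notin> {1..n} \<longrightarrow> e i = 0) \<and> (\<Sum>i=1..n. e i) = m}"

lemma Eset_finite: "finite (Eset n m)"
proof -
  have "Eset n m \<subseteq> {f. \<forall>x. (x \<in> {1..n} \<longrightarrow> f x \<in> {0..m}) \<and> (x \<notin> {1..n} \<longrightarrow> f x = 0)}"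
  proof safe
    fix e x assume e: "e \<in> Eset n m" and x: "x \<in> {1..n}"
    have "e x \<le> (\<Sum>i=1..n. e i)" using x by (intro member_le_sum) auto
    then show "e x \<in> {0..m}" using e by (auto simp: Eset_def)
  qed (auto simp: Eset_def)
  then show ?thesis by (rule finite_subset) (intro finite_set_of_finite_funs; simp)
qed

lemma CH_Suc:
  fixes x :: "nat \<Rightarrow> 'a::comm_ring_1"
  shows "(\<Sum>e\<in>Eset (Suc n) m. \<Prod>i=1..Suc n. x i ^ e i) =
         (\<Sum>j\<le>m. x (Suc n) ^ j * (\<Sum>e\<in>Eset n (m-j). \<Prod>i=1..n. x i ^ e i))"
proof -
  have "(\<Sum>j\<le>m. x (Suc n) ^ j * (\<Sum>e\<in>Eset n (m-j). \<Prod>i=1..n. x i ^ e i))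
     = (\<Sum>j\<le>m. (\<Sum>e\<in>Eset n (m-j). x (Suc n) ^ j * (\<Prod>i=1..n. x i ^ e i)))"
    by (simp add: sum_distrib_left)
  also have "\<dots> = (\<Sum>(j,e)\<in>Sigma {..m} (\<lambda>j. Eset n (m-j)). x (Suc n) ^ j * (\<Prod>i=1..n. x i ^ e i))"
    by (rule sum.Sigma) (auto simp: Eset_finite)
  also have "\<dots> = (\<Sum>e\<in>Eset (Suc n) m. \<Prod>i=1..Suc n. x i ^ e i)"
  proof (rule sum.reindex_bij_witness[where j = "\<lambda>(j,e). e(Suc n := j)"
                                       and i = "\<lambda>e. (e (Suc n), e(Suc n := 0))"])
    fix b assume b: "b \<in> Sigma {..m} (\<lambda>j. Eset n (m - j))"
    obtain j e where be: "b = (j, e)" by force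
    have ej: "j \<le> m" "e \<in> Eset n (m - j)" using b be by auto
    have e0: "e (Suc n) = 0" using ej by (auto simp: Eset_def)
    have s2: "(\<Sum>i=1..n. (e(Suc n := j)) i) = (\<Sum>i=1..n. e i)" by (rule sum.cong) auto
    show "(case b of (j, e) \<Rightarrow> e(Suc n := j)) \<in> Eset (Suc n) m"
      using ej s2 be by (auto simp: Eset_def)
    show "(\<lambda>e. (e (Suc n), e(Suc n := 0))) (case b of (j, e) \<Rightarrow> e(Suc n := j)) = b"
      using be e0 by auto
    have p2: "(\<Prod>i=1..n. x i ^ (e(Suc n := j)) i) = (\<Prod>i=1..n. x i ^ e i)" by (rule prod.cong) auto
    show "(\<Prod>i = 1..Suc n. x i ^ (case b of (j, e) \<Rightarrow> e(Suc n := j)) i) =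
          (case b of (j, e) \<Rightarrow> x (Suc n) ^ j * (\<Prod>i = 1..n. x i ^ e i))"
      using p2 be by (simp add: mult.commute)
  next
    fix a assume a: "a \<in> Eset (Suc n) m"
    have s: "(\<Sum>i=1..Suc n. a i) = (\<Sum>i=1..n. a i) + a (Suc n)" by simp
    have s2: "(\<Sum>i=1..n. (a(Suc n := 0)) i) = (\<Sum>i=1..n. a i)" by (rule sum.cong) auto
    show "(case (a (Suc n), a(Suc n := 0)) of (j, e) \<Rightarrow> e(Suc n := j)) = a" by auto
    show "(a (Suc n), a(Suc n := 0)) \<in> Sigma {..m} (\<lambda>j. Eset n (m - j))"
      using a s s2 by (auto simp: Eset_def)
  qed
  finally show ?thesis ..
qed

definition CH :: "nat \<Rightarrow> (nat \<Rightarrow> 'a::comm_ring_1) \<Rightarrow> nat \<Rightarrow> 'a" where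
  "CH n x m = (\<Sum>e\<in>Eset n m. \<Prod>i=1..n. x i ^ e i)"

lemma Eset_0: "Eset 0 m = (if m = 0 then {\<lambda>_. 0} else {})"
  by (auto simp: Eset_def)

lemma CH_fps: "Abs_fps (CH n x) = (\<Prod>i=1..n. Abs_fps (\<lambda>j. x i ^ j))"
proof (induction n)
  case 0
  show ?case by (rule fps_ext) (simp add: CH_def Eset_0)
next
  case (Suc n)
  have "(\<Prod>i=1..Suc n. Abs_fps (\<lambda>j. x i ^ j)) = Abs_fps (\<lambda>j. x (Suc n) ^ j) * (\<Prod>i=1..n. Abs_fps (\<lambda>j. x i ^ j))"
    by (simp add: mult.commute)
  also have "\<dots> = Abs_fps (\<lambda>j. x (Suc n) ^ j) * Abs_fps (CH n x)" using Suc by simp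
  also have "\<dots> = Abs_fps (CH (Suc n) x)"
    by (rule fps_ext) (simp only: fps_mult_nth CH_def CH_Suc atLeast0AtMost fps_nth_Abs_fps)
  finally show ?case by simp
qed

lemma geo_fps: "Abs_fps (\<lambda>j. (a::'a::comm_ring_1) ^ j) * (1 - fps_const a * fps_X) = 1"
proof (rule fps_ext)
  fix m
  have "Abs_fps (\<lambda>j. a ^ j) * (1 - fps_const a * fps_X) = Abs_fps (\<lambda>j. a ^ j) - fps_const a * (fps_X * Abs_fps (\<lambda>j. a ^ j))"
    by (simp add: algebra_simps)
  then show "(Abs_fps (\<lambda>j. a ^ j) * (1 - fps_const a * fps_X)) $ m = (1::'a fps) $ m"
    by (cases m) simp_all
qed

lemma fps_small:
  fixes F :: "'a::comm_ring_1 fps"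
  assumes "F * (1 - fps_const c * fps_X ^ n) = 1" "m < n"
  shows "F $ m = (if m = 0 then 1 else 0)"
proof -
  have "F * (1 - fps_const c * fps_X ^ n) = F - fps_const c * (fps_X ^ n * F)"
    by (simp add: algebra_simps)
  then have "(F - fps_const c * (fps_X ^ n * F)) $ m = (1::'a fps) $ m" using assms(1) by simp
  then show ?thesis using assms(2) by (simp add: fps_X_power_mult_nth)
qed

lemma reflect_lin: "reflect_poly [:- a, 1:] = [:1, - (a::'a::comm_ring_1):]"
  by (rule poly_eqI) (auto simp: coeff_reflect_poly coeff_pCons split: nat.splits)

lemma reflect_binom:
  assumes "0 < n"
  shows "reflect_poly (monom 1 n - [:lam:]) = 1 - monom (lam::'a::comm_ring_1) n"
proof -
  have e: "monom 1 n - [:lam:] = monom 1 n + [:-lam:]" by simp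
  have d: "degree (monom 1 n - [:lam:]) = n"
    unfolding e using assms by (subst degree_add_eq_left) (auto simp: degree_monom_eq)
  show ?thesis
  proof (rule poly_eqI)
    fix i
    show "coeff (reflect_poly (monom 1 n - [:lam:])) i = coeff (1 - monom lam n) i"
      unfolding coeff_reflect_poly d using assms
      by (cases "i = 0"; cases "i = n"; cases "n < i") (auto simp add: coeff_monom coeff_1 coeff_pCons split: nat.split)
  qed
qed

lemma complete_hom_small:
  fixes x :: "nat \<Rightarrow> 'a::idom"
  assumes roots: "(\<Prod>i=1..n. [:- x i, 1:]) = monom 1 n - [:lam:]"
    and n0: "0 < n" and mn: "m < n"
  shows "complete_hom (int m) n x = (if m = 0 then 1 else 0)"
proof -
  have "reflect_poly (\<Prod>i=1..n. [:- x i, 1:]) = 1 - monom lam n"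
    using roots reflect_binom[OF n0] by simp
  then have "(\<Prod>i=1..n. [:1, - x i:]) = 1 - monom lam n"
    by (simp add: reflect_poly_prod reflect_lin)
  then have "fps_of_poly (\<Prod>i=1..n. [:1, - x i:]) = fps_of_poly (1 - monom lam n)" by simp
  then have P: "(\<Prod>i=1..n. 1 - fps_const (x i) * fps_X) = 1 - fps_const lam * fps_X ^ n" if "fps_of_poly (\<Prod>i=1..n. [:1, - x i:]) = fps_of_poly (1 - monom lam n)"
  proof -
    have l: "fps_of_poly [:1, - x i:] = 1 - fps_const (x i) * fps_X" for i
      by (rule fps_ext) (simp add: coeff_pCons fps_X_def split: nat.split)
    have r: "fps_of_poly (1 - monom lam n) = 1 - fps_const lam * fps_X ^ n"
      by (simp add: fps_of_poly_diff fps_of_poly_monom)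
    show ?thesis using that l r by (simp add: fps_of_poly_prod)
  qed
  have "Abs_fps (CH n x) * (1 - fps_const lam * fps_X ^ n)
      = (\<Prod>i=1..n. Abs_fps (\<lambda>j. x i ^ j) * (1 - fps_const (x i) * fps_X))"
    by (simp add: CH_fps P[OF \<open>fps_of_poly (\<Prod>i=1..n. [:1, - x i:]) = fps_of_poly (1 - monom lam n)\<close>, symmetric] prod.distrib)
  also have "\<dots> = 1" by (simp add: geo_fps)
  finally have "Abs_fps (CH n x) $ m = (if m = 0 then 1 else 0)"
    using fps_small mn by blast
  then show ?thesis by (simp add: complete_hom_def CH_def Eset_def)
qed

lemma const_poly_pow: "[:c:] ^ m = [:(c::'a::comm_ring_1) ^ m:]"
  by (induct m) (simp_all add: algebra_simps)

lemma root_pow: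
  fixes x :: "nat \<Rightarrow> 'a::idom"
  assumes roots: "(\<Prod>i=1..n. [:- x i, 1:]) = monom 1 n - [:lam:]"
    and a: "a \<in> {1..n}"
  shows "x a ^ n = lam"
proof -
  have "poly (\<Prod>i=1..n. [:- x i, 1:]) (x a) = 0"
    unfolding poly_prod using a by (intro prod_zero) auto
  then show ?thesis using roots by (simp add: poly_monom)
qed

lemma power_sums_small:
  fixes x :: "nat \<Rightarrow> 'a::idom"
  assumes roots: "(\<Prod>i=1..n. [:- x i, 1:]) = monom 1 n - [:lam:]"
    and m: "m < n"
  shows "(\<Sum>a=1..n. x a ^ m) = (if m = 0 then of_nat n else 0)"
proof -
  define R where "R a = (\<Sum>i<n. smult (x a ^ (n - Suc i)) (monom 1 i))" for a
  have RA: "(\<Prod>i\<in>{1..n} - {a}. [:- x i, 1:]) = R a" if a: "a \<in> {1..n}" for a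
  proof -
    have "[:- x a, 1:] * (\<Prod>i\<in>{1..n} - {a}. [:- x i, 1:]) = monom 1 n - [:lam:]"
      using roots a by (simp add: prod.remove)
    also have "\<dots> = [:0,1:] ^ n - [:x a:] ^ n"
      using root_pow[OF roots a] by (simp add: monom_altdef const_poly_pow)
    also have "\<dots> = ([:0,1:] - [:x a:]) * (\<Sum>i<n. [:x a:] ^ (n - Suc i) * [:0,1:] ^ i)"
      by (rule power_diff_sumr2)
    also have "\<dots> = [:- x a, 1:] * R a"
      by (simp add: R_def const_poly_pow monom_altdef)
    finally have "[:- x a, 1:] * (\<Prod>i\<in>{1..n} - {a}. [:- x i, 1:]) = [:- x a, 1:] * R a" .
    then show ?thesis by (subst (asm) mult_left_cancel) auto
  qed
  have "pderiv (\<Prod>i=1..n. [:- x i, 1:]) = monom (of_nat n) (n - 1)"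
    using roots by (simp add: pderiv_monom pderiv_diff)
  moreover have "pderiv (\<Prod>i=1..n. [:- x i, 1:]) = (\<Sum>a\<in>{1..n}. (\<Prod>i\<in>{1..n} - {a}. [:- x i, 1:]) * pderiv [:- x a, 1:])"
    by (rule pderiv_prod)
  moreover have "\<dots> = (\<Sum>a=1..n. R a)"
  proof (rule sum.cong)
    fix a assume a: "a \<in> {1..n}"
    show "(\<Prod>i\<in>{1..n} - {a}. [:- x i, 1:]) * pderiv [:- x a, 1:] = R a"
      using RA[OF a] by (simp add: pderiv_pCons)
  qed simp
  ultimately have E: "(\<Sum>a=1..n. R a) = monom (of_nat n) (n - 1)" by simp
  have cR: "coeff (R a) (n - 1 - m) = x a ^ m" for a
  proof -
    have "coeff (R a) (n - 1 - m) = (\<Sum>i<n. x a ^ (n - Suc i) * (if i = n - 1 - m then 1 else 0))"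
      by (simp add: R_def coeff_sum coeff_monom)
    also have "\<dots> = (\<Sum>i<n. if i = n - 1 - m then x a ^ (n - Suc i) else 0)"
      by (rule sum.cong) auto
    also have "\<dots> = x a ^ (n - Suc (n - 1 - m))"
      by (simp only: sum.delta[OF finite_lessThan]) (use m in simp)
    also have "n - Suc (n - 1 - m) = m" using m by simp
    finally show ?thesis .
  qed
  have "(\<Sum>a=1..n. x a ^ m) = coeff (\<Sum>a=1..n. R a) (n - 1 - m)" unfolding coeff_sum cR ..
  then show ?thesis using m E by (auto simp: coeff_monom)
qed

lemma poly_bound_sum:
  fixes y :: "'a::comm_ring_1"
  assumes "degree p < N"
  shows "poly p y = (\<Sum>i<N. coeff p i * y ^ i)"
proof -
  have "poly p y = (\<Sum>i\<le>degree p. coeff p i * y ^ i)" by (rule poly_altdef)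
  also have "\<dots> = (\<Sum>i<N. coeff p i * y ^ i)"
    using assms by (intro sum.mono_neutral_left) (auto simp: coeff_eq_0)
  finally show ?thesis .
qed

lemma power_sums_2n:
  fixes x :: "nat \<Rightarrow> 'a::idom"
  assumes roots: "(\<Prod>i=1..n. [:- x i, 1:]) = monom 1 n - [:lam:]"
    and m: "m < 2 * n"
  shows "(\<Sum>a=1..n. x a ^ m) = (if m = 0 then of_nat n else if m = n then of_nat n * lam else 0)"
proof (cases "m < n")
  case True
  then show ?thesis using power_sums_small[OF roots True] by auto
next
  case False
  have "(\<Sum>a=1..n. x a ^ m) = (\<Sum>a=1..n. lam * x a ^ (m - n))"
  proof (rule sum.cong)
    fix a assume a: "a \<in> {1..n}"
    have "x a ^ m = x a ^ n * x a ^ (m - n)" using False by (simp add: power_add[symmetric])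
    then show "x a ^ m = lam * x a ^ (m - n)" using root_pow[OF roots a] by simp
  qed simp
  also have "\<dots> = lam * (\<Sum>a=1..n. x a ^ (m - n))" by (simp add: sum_distrib_left)
  also have "\<dots> = lam * (if m - n = 0 then of_nat n else 0)"
    using power_sums_small[OF roots, of "m - n"] m False by simp
  finally show ?thesis using False by (auto simp: mult.commute)
qed

lemma sum_poly_roots:
  fixes x :: "nat \<Rightarrow> 'a::idom"
  assumes roots: "(\<Prod>i=1..n. [:- x i, 1:]) = monom 1 n - [:lam:]"
    and n0: "0 < n" and dp: "degree p < 2 * n"
  shows "(\<Sum>a=1..n. poly p (x a)) = of_nat n * (coeff p 0 + lam * coeff p n)"
proof -
  have "(\<Sum>a=1..n. poly p (x a)) = (\<Sum>a=1..n. \<Sum>i<2*n. coeff p i * x a ^ i)"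
    using poly_bound_sum[OF dp] by simp
  also have "\<dots> = (\<Sum>i<2*n. coeff p i * (\<Sum>a=1..n. x a ^ i))"
    by (subst sum.swap) (simp add: sum_distrib_left)
  also have "\<dots> = (\<Sum>i<2*n. coeff p i * (if i = 0 then of_nat n else if i = n then of_nat n * lam else 0))"
  proof (rule sum.cong)
    fix i assume "i \<in> {..<2*n}"
    then show "coeff p i * (\<Sum>a=1..n. x a ^ i) = coeff p i * (if i = 0 then of_nat n else if i = n then of_nat n * lam else 0)"
      using power_sums_2n[OF roots, of i] by simp
  qed simp
  also have "\<dots> = (\<Sum>i<2*n. (if i = 0 then coeff p i * of_nat n else 0) + (if i = n then coeff p i * (of_nat n * lam) else 0))"
    by (rule sum.cong) (use n0 in auto)
  also have "\<dots> = coeff p 0 * of_nat n + coeff p n * (of_nat n * lam)"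
    using n0 by (simp add: sum.distrib)
  finally show ?thesis by (simp add: algebra_simps)
qed

lemma vander_zero:
  fixes b y :: "nat \<Rightarrow> 'a::idom"
  assumes fin: "finite B" and inj: "inj_on b B"
    and eqs: "\<forall>j < card B. (\<Sum>i\<in>B. y i * b i ^ j) = 0"
    and i0: "i0 \<in> B"
  shows "y i0 = 0"
proof -
  define L where "L = (\<Prod>i\<in>B - {i0}. [:- b i, 1:])"
  have "degree L \<le> (\<Sum>i\<in>B - {i0}. degree [:- b i, 1:])"
    unfolding L_def using degree_prod_sum_le[of "B - {i0}" "\<lambda>i. [:- b i, 1:]"] fin by (simp add: o_def)
  also have "\<dots> = card (B - {i0})" by simp
  also have "\<dots> < card B" using fin i0 by (metis card_Diff1_less)
  finally have dL: "degree L < card B" .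
  have "(\<Sum>i\<in>B. y i * poly L (b i)) = (\<Sum>i\<in>B. y i * (\<Sum>j<card B. coeff L j * b i ^ j))"
    using poly_bound_sum[OF dL] by simp
  also have "\<dots> = (\<Sum>j<card B. coeff L j * (\<Sum>i\<in>B. y i * b i ^ j))"
    by (simp add: sum_distrib_left sum_distrib_right algebra_simps) (rule sum.swap)
  also have "\<dots> = 0" using eqs by simp
  finally have S0: "(\<Sum>i\<in>B. y i * poly L (b i)) = 0" .
  have z: "poly L (b i) = 0" if "i \<in> B - {i0}" for i
    unfolding L_def poly_prod using that fin by (intro prod_zero) auto
  have nz: "poly L (b i0) \<noteq> 0"
    unfolding L_def poly_prod using fin inj i0
    by (subst prod_zero_iff) (auto dest: inj_onD)
  have "(\<Sum>i\<in>B. y i * poly L (b i)) = y i0 * poly L (b i0) + (\<Sum>i\<in>B - {i0}. y i * poly L (b i))"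
    using fin i0 by (rule sum.remove)
  also have "(\<Sum>i\<in>B - {i0}. y i * poly L (b i)) = 0" using z by simp
  finally show ?thesis using S0 nz by simp
qed

lemma coeff_Hd: "coeff (\<Sum>i<k. monom (c i) i) j = (if j < k then c j else (0::'a::comm_ring_1))"
proof -
  have "coeff (\<Sum>i<k. monom (c i) i) j = (\<Sum>i<k. if i = j then c i else 0)"
    by (simp add: coeff_sum coeff_monom)
  then show ?thesis by simp
qed

lemma coeff_Et: "coeff (\<Sum>j=0..l. monom (e j) j) a = (if a \<le> l then e a else (0::'a::comm_ring_1))"
proof -
  have "coeff (\<Sum>j=0..l. monom (e j) j) a = (\<Sum>j=0..l. if j = a then e j else 0)"
    by (simp add: coeff_sum coeff_monom)
  then show ?thesis by simp
qed

lemma E_eq: "(\<Sum>j=0..l. monom (e j) (k + j)) = monom 1 k * (\<Sum>j=0..l. monom (e j) j :: 'a::comm_ring_1 poly)"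
  by (simp add: sum_distrib_left mult_monom)

lemma char_card_zero: "of_nat (card (UNIV :: 'a::{finite,ring_1} set)) = (0::'a)"
proof -
  have "(\<Sum>x\<in>(UNIV::'a set). x + 1) = (\<Sum>x\<in>UNIV. x)"
    by (rule sum.reindex_bij_witness[where i = "\<lambda>x. x - 1" and j = "\<lambda>x. x + 1"]) simp_all
  then show ?thesis by (simp add: sum.distrib)
qed

lemma n_nonzero:
  assumes "n dvd (card (UNIV :: 'a::{finite,field} set) - 1)"
  shows "of_nat n \<noteq> (0::'a)"
proof
  assume n0: "of_nat n = (0::'a)"
  obtain d where d: "card (UNIV :: 'a set) - 1 = n * d" using assms by blast
  have A: "of_nat (card (UNIV :: 'a set) - 1) = (0::'a)" using d n0 by simp
  have "card (UNIV :: 'a set) = (card (UNIV :: 'a set) - 1) + 1"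
    using finite_UNIV_card_ge_0[where 'a='a] by simp
  then have "of_nat (card (UNIV :: 'a set)) = (of_nat (card (UNIV :: 'a set) - 1 + 1) :: 'a)"
    by simp
  also have "\<dots> = of_nat (card (UNIV :: 'a set) - 1) + 1" by (simp only: of_nat_add of_nat_1)
  finally have "of_nat (card (UNIV :: 'a set)) = (of_nat (card (UNIV :: 'a set) - 1) :: 'a) + 1" .
  then show False using A char_card_zero[where 'a='a] by simp
qed

lemma complete_hom_int:
  fixes x :: "nat \<Rightarrow> 'a::idom"
  assumes roots: "(\<Prod>i=1..n. [:- x i, 1:]) = monom 1 n - [:lam:]"
    and n0: "0 < n" and z: "z < int n"
  shows "complete_hom z n x = (if z = 0 then 1 else 0)"
proof (cases "z < 0")
  case True then show ?thesis by (simp add: complete_hom_def)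
next
  case False
  then obtain m where m: "z = int m" by (metis nonneg_int_cases not_less)
  show ?thesis using complete_hom_small[OF roots n0, of m] m z by simp
qed

lemma prod_roots:
  fixes x :: "nat \<Rightarrow> 'a::idom"
  assumes roots: "(\<Prod>i=1..n. [:- x i, 1:]) = monom 1 n - [:lam:]"
    and n0: "0 < n"
  shows "(-1) ^ (n - 1) * (\<Prod>i=1..n. x i) = lam"
proof -
  have "poly (\<Prod>i=1..n. [:- x i, 1:]) 0 = poly (monom 1 n - [:lam:]) 0" using roots by simp
  then have "(\<Prod>i=1..n. - x i) = - lam" using n0 by (simp add: poly_prod poly_monom)
  moreover have "(\<Prod>i=1..n. - x i) = (\<Prod>i=1..n. (-1) * x i)" by simp
  then have "(\<Prod>i=1..n. - x i) = (-1) ^ n * (\<Prod>i=1..n. x i)"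
    by (simp only: prod.distrib prod_constant) simp
  moreover have "(-1::'a) ^ n = - ((-1) ^ (n - 1))" using n0
    by (cases n) simp_all
  ultimately show ?thesis by simp
qed


theorem theorem4p4:
  fixes n k l r :: nat
    and lam :: "'a::{finite,field}"
    and alpha eta v :: "nat \<Rightarrow> 'a"
  assumes q_odd: "odd (card (UNIV :: 'a set))"
    and n_pos: "0 < n"
    and n_dvd: "n dvd (card (UNIV :: 'a set) - 1)"
    and lam_nz: "lam \<noteq> 0"
    and lam_ord: "lam ^ ((card (UNIV :: 'a set) - 1) div n) = 1"
    and alpha_dist: "inj_on alpha {1..n}"
    and alpha_roots: "(\<Prod>i=1..n. [:- alpha i, 1:]) = monom 1 n - [:lam:]"
    and eta_nz: "\<exists>t\<le>l. eta t \<noteq> 0"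
    and r_le: "r \<le> l"
    and k_def: "int n - int l - int r = 2 * int k"
    and k_ge: "2 \<le> k"
    and v_pm: "\<forall>i\<in>{1..n-k+1}. v i = 1 \<or> v i = -1"
    and v_other: "\<forall>i\<in>{n-k+2..n}. v i \<notin> {-1, 0, 1}"
    and cond: "1 + (\<Sum>t=r..l. eta t *
                 ((-1) ^ (n - 1) * (\<Prod>i=1..n. alpha i) *
                  Omega n l alpha eta (int l + 1 + int r - int t))) \<noteq> 0"
  shows "tgrs_code n k l eta alpha v \<inter> dual_code n (tgrs_code n k l eta alpha v) = {\<lambda>i. 0}"
proof -
  define B where "B = {n-k+2..n}"
  define w where "w i = v i * v i" for i
  have nk: "n = 2*k + l + r" using k_def by linarith
  have k0: "0 < k" using k_ge by simp
  have lt: "k + l < n" using nk k_ge by simp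
  have cardB: "card B = k - 1" unfolding B_def using nk k_ge by simp
  have BA: "B \<subseteq> {1..n}" unfolding B_def by auto
  have finB: "finite B" unfolding B_def by simp
  have injB: "inj_on alpha B" using alpha_dist BA by (rule inj_on_subset)
  have alpha_nz: "alpha i \<noteq> 0" if "i \<in> {1..n}" for i
    using root_pow[OF alpha_roots that] lam_nz n_pos by auto
  have w1: "w i = 1" if "i \<in> {1..n} - B" for i
  proof -
    have "i \<in> {1..n-k+1}" using that unfolding B_def by auto
    then have "v i = 1 \<or> v i = -1" using v_pm by blast
    then show ?thesis unfolding w_def by auto
  qed
  have wB: "w i \<noteq> 1" if "i \<in> B" for i
  proof
    assume "w i = 1"
    then have "(v i - 1) * (v i + 1) = 0" unfolding w_def by (simp add: algebra_simps)
    then have "v i = 1 \<or> v i = -1" by (auto simp: eq_neg_iff_add_eq_0)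
    then show False using v_other that unfolding B_def by auto
  qed
  have nnz: "(of_nat n :: 'a) \<noteq> 0" using n_nonzero[OF n_dvd] .

  define Et where "Et = (\<Sum>j=0..l. monom (eta j) j)"
  define E where "E = monom 1 k * Et"
  have tp: "tgrs_polys k l eta = {(\<Sum>i<k. monom (fc i) i) + smult (fc 0) E | fc. True}"
    unfolding tgrs_polys_def E_def Et_def E_eq ..
  have cEt: "coeff Et a = (if a \<le> l then eta a else 0)" for a
    unfolding Et_def by (rule coeff_Et)
  have dEt: "degree Et \<le> l" by (rule degree_le) (simp add: cEt)
  have dE: "degree E \<le> k + l"
    unfolding E_def using degree_mult_le[of "monom 1 k" Et] degree_monom_le[of "1::'a" k] dEt by linarith
  define Hd where "Hd fc = (\<Sum>i<k. monom (fc i) i)" for fc :: "nat \<Rightarrow> 'a"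
  have cHd: "coeff (Hd fc) j = (if j < k then fc j else 0)" for fc j
    unfolding Hd_def by (rule coeff_Hd)
  have dHd: "degree (Hd fc) \<le> k - 1" for fc by (rule degree_le) (auto simp add: cHd)
  define Fp where "Fp fc = Hd fc + smult (fc 0) E" for fc
  have dFp: "degree (Fp fc) \<le> k + l" for fc
    unfolding Fp_def using degree_add_le[where p="Hd fc" and q="smult (fc 0) E" and n="k + l"] dHd[of fc] dE
      degree_smult_le[of "fc 0" E] by simp
  have tp2: "tgrs_polys k l eta = {Fp fc | fc. True}" unfolding tp Fp_def Hd_def ..

  have main: "Fp fc = 0"
    if dual: "\<forall>g\<in>tgrs_polys k l eta. (\<Sum>i=1..n. w i * poly (Fp fc) (alpha i) * poly g (alpha i)) = 0"
    for fc
  proof -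
    define f where "f = Fp fc"
    define Fv where "Fv i = poly f (alpha i)" for i
    have split: "(\<Sum>i=1..n. w i * Fv i * G i) = (\<Sum>i=1..n. Fv i * G i) + (\<Sum>i\<in>B. (w i - 1) * Fv i * G i)" for G
    proof -
      have "(\<Sum>i=1..n. w i * Fv i * G i) = (\<Sum>i=1..n. Fv i * G i + (w i - 1) * Fv i * G i)"
        by (rule sum.cong) (simp_all add: algebra_simps)
      also have "\<dots> = (\<Sum>i=1..n. Fv i * G i) + (\<Sum>i=1..n. (w i - 1) * Fv i * G i)"
        by (rule sum.distrib)
      also have "(\<Sum>i=1..n. (w i - 1) * Fv i * G i) = (\<Sum>i\<in>B. (w i - 1) * Fv i * G i)"
        by (rule sum.mono_neutral_right) (use BA w1 in auto)
      finally show ?thesis .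
    qed
    have orth: "(\<Sum>i=1..n. w i * Fv i * poly g (alpha i)) = 0" if "g \<in> tgrs_polys k l eta" for g
      using dual that unfolding Fv_def f_def by blast
    have df: "degree f \<le> k + l" unfolding f_def by (rule dFp)
    have step1: "(\<Sum>i\<in>B. (w i - 1) * Fv i * alpha i ^ j) = 0" if j: "1 \<le> j" "j \<le> k - 1" for j
    proof -
      have mem: "monom 1 j \<in> tgrs_polys k l eta"
      proof -
        have "Fp (\<lambda>i. if i = j then 1 else 0) = monom 1 j"
          unfolding Fp_def using j by (intro poly_eqI) (auto simp: cHd coeff_monom)
        then show ?thesis unfolding tp2 by (metis (mono_tags, lifting) mem_Collect_eq)
      qed
      have dm: "degree (monom 1 j * f) < 2 * n"
        using degree_mult_le[of "monom 1 j" f] degree_monom_le[of "1::'a" j] df j lt by simp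
      have "(\<Sum>i=1..n. Fv i * alpha i ^ j) = (\<Sum>i=1..n. poly (monom 1 j * f) (alpha i))"
        unfolding Fv_def by (simp add: poly_monom mult.commute)
      also have "\<dots> = of_nat n * (coeff (monom 1 j * f) 0 + lam * coeff (monom 1 j * f) n)"
        by (rule sum_poly_roots[OF alpha_roots n_pos dm])
      also have "\<dots> = 0"
      proof -
        have "degree f < n - j" using j nk df by linarith
        then have "coeff f (n - j) = 0" by (rule coeff_eq_0)
        then show ?thesis using j by (simp add: coeff_monom_mult)
      qed
      finally have "(\<Sum>i=1..n. Fv i * alpha i ^ j) = 0" .
      moreover have "(\<Sum>i=1..n. w i * Fv i * alpha i ^ j) = 0"
        using orth[OF mem] by (simp add: poly_monom)
      ultimately show ?thesis using split[of "\<lambda>i. alpha i ^ j"] by simp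
    qed
    have FvB: "Fv i = 0" if i: "i \<in> B" for i
    proof -
      have "(w i - 1) * Fv i * alpha i = 0"
      proof (rule vander_zero[OF finB injB _ i, where y = "\<lambda>i. (w i - 1) * Fv i * alpha i"])
        show "\<forall>j<card B. (\<Sum>i\<in>B. (w i - 1) * Fv i * alpha i * alpha i ^ j) = 0"
        proof (intro allI impI)
          fix j assume "j < card B"
          then have "(\<Sum>i\<in>B. (w i - 1) * Fv i * alpha i ^ Suc j) = 0"
            using cardB by (intro step1) auto
          then show "(\<Sum>i\<in>B. (w i - 1) * Fv i * alpha i * alpha i ^ j) = 0"
            by (simp add: mult.assoc)
        qed
      qed
      then show ?thesis using wB[OF i] alpha_nz[of i] i BA by auto
    qed
    define g0 where "g0 = 1 + E"
    have mem0: "g0 \<in> tgrs_polys k l eta"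
    proof -
      have "Hd (\<lambda>i. if i = 0 then 1 else 0) = 1"
        using k0 by (intro poly_eqI) (auto simp: cHd coeff_1)
      then have "Fp (\<lambda>i. if i = 0 then 1 else 0) = g0" unfolding Fp_def g0_def by simp
      then show ?thesis unfolding tp2 by (metis (mono_tags, lifting) mem_Collect_eq)
    qed
    have dg0: "degree g0 \<le> k + l"
      unfolding g0_def using degree_add_le[where p=1 and q=E and n="k + l"] dE by simp
    have dfg: "degree (f * g0) < 2 * n"
      using degree_mult_le[of f g0] df dg0 lt by simp
    have "(\<Sum>i=1..n. Fv i * poly g0 (alpha i)) = 0"
      using orth[OF mem0] split[of "\<lambda>i. poly g0 (alpha i)"] FvB by simp
    then have "(\<Sum>i=1..n. poly (f * g0) (alpha i)) = 0" unfolding Fv_def by simp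
    then have "of_nat n * (coeff (f * g0) 0 + lam * coeff (f * g0) n) = 0"
      using sum_poly_roots[OF alpha_roots n_pos dfg] by simp
    then have C0: "coeff (f * g0) 0 + lam * coeff (f * g0) n = 0" using nnz by simp
    have cE0: "coeff E 0 = 0" unfolding E_def using k0 by (simp add: coeff_monom_mult)
    have c0: "coeff (f * g0) 0 = fc 0"
      unfolding f_def Fp_def g0_def using k0 by (simp add: coeff_mult_0 cHd cE0)
    define S where "S = (\<Sum>t=r..l. eta t * eta (l + r - t))"
    have cEE: "coeff (E * E) n = S"
    proof -
      have "E * E = monom 1 (2 * k) * (Et * Et)"
      proof -
        have "monom (1::'a) (2 * k) = monom 1 k * monom 1 k" by (simp add: mult_monom mult_2)
        then show ?thesis unfolding E_def by (simp add: algebra_simps)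
      qed
      then have "coeff (E * E) n = coeff (Et * Et) (l + r)"
        using nk by (simp add: coeff_monom_mult)
      also have "\<dots> = (\<Sum>a\<le>l + r. coeff Et a * coeff Et (l + r - a))" by (rule coeff_mult)
      also have "\<dots> = (\<Sum>a\<in>{r..l}. coeff Et a * coeff Et (l + r - a))"
        by (rule sum.mono_neutral_right) (auto simp: cEt)
      also have "\<dots> = S" unfolding S_def by (rule sum.cong) (auto simp: cEt)
      finally show ?thesis .
    qed
    have cn: "coeff (f * g0) n = fc 0 * S"
    proof -
      have "f * g0 = Hd fc + Hd fc * E + smult (fc 0) E + smult (fc 0) (E * E)"
        unfolding f_def Fp_def g0_def by (simp add: algebra_simps smult_add_right)
      moreover have "coeff (Hd fc) n = 0" using lt by (simp add: cHd)
      moreover have "coeff (Hd fc * E) n = 0"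
      proof (rule coeff_eq_0)
        show "degree (Hd fc * E) < n"
          using degree_mult_le[of "Hd fc" E] dHd[of fc] dE nk k_ge by simp
      qed
      moreover have "coeff E n = 0" using dE lt by (simp add: coeff_eq_0)
      ultimately show ?thesis using cEE by simp
    qed
    have P: "(-1) ^ (n - 1) * (\<Prod>i=1..n. alpha i) = lam" by (rule prod_roots[OF alpha_roots n_pos])
    have Om: "Omega n l alpha eta (int l + 1 + int r - int t) = eta (l + r - t)" if t: "t \<in> {r..l}" for t
    proof -
      have "Omega n l alpha eta (int l + 1 + int r - int t)
          = (\<Sum>s=0..l. eta s * (if s = l + r - t then 1 else 0))"
        unfolding Omega_def
      proof (rule sum.cong)
        fix s assume s: "s \<in> {0..l}"
        have z: "int s + 1 - (int l + 1 + int r - int t) = int s - int (l + r - t)" using t by auto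
        have "complete_hom (int s + 1 - (int l + 1 + int r - int t)) n alpha = (if s = l + r - t then 1 else 0)"
          unfolding z using complete_hom_int[OF alpha_roots n_pos, of "int s - int (l + r - t)"] s lt
          by auto
        then show "eta s * complete_hom (int s + 1 - (int l + 1 + int r - int t)) n alpha
                 = eta s * (if s = l + r - t then 1 else 0)" by simp
      qed simp
      also have "\<dots> = eta (l + r - t)" using t by (auto simp: if_distrib cong: if_cong)
      finally show ?thesis .
    qed
    have "1 + (\<Sum>t=r..l. eta t * ((-1) ^ (n - 1) * (\<Prod>i=1..n. alpha i) *
                  Omega n l alpha eta (int l + 1 + int r - int t))) = 1 + lam * S"
    proof -
      have "(\<Sum>t=r..l. eta t * ((-1) ^ (n - 1) * (\<Prod>i=1..n. alpha i) *
                  Omega n l alpha eta (int l + 1 + int r - int t))) = (\<Sum>t=r..l. lam * (eta t * eta (l + r - t)))"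
        unfolding P by (rule sum.cong) (simp_all add: Om)
      then show ?thesis unfolding S_def by (simp add: sum_distrib_left)
    qed
    then have nz: "1 + lam * S \<noteq> 0" using cond by simp
    have "fc 0 * (1 + lam * S) = 0" using C0 c0 cn by (simp add: algebra_simps)
    then have fc0: "fc 0 = 0" using nz by simp
    have fH: "f = Hd fc" unfolding f_def Fp_def fc0 by simp
    show "Fp fc = 0"
    proof (rule ccontr)
      assume "Fp fc \<noteq> 0"
      then have fnz: "f \<noteq> 0" unfolding f_def .
      have sub: "insert 0 (alpha ` B) \<subseteq> {x. poly f x = 0}"
      proof
        fix x assume "x \<in> insert 0 (alpha ` B)"
        then show "x \<in> {x. poly f x = 0}"
        proof
          assume "x = 0"
          then show ?thesis by (simp add: poly_0_coeff_0 fH cHd fc0 k0)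
        next
          assume "x \<in> alpha ` B"
          then show ?thesis using FvB unfolding Fv_def by auto
        qed
      qed
      have "0 \<notin> alpha ` B" using alpha_nz BA by auto
      then have ck: "card (insert 0 (alpha ` B)) = k"
        using finB card_image[OF injB] cardB k0 by simp
      have "card (insert 0 (alpha ` B)) \<le> card {x. poly f x = 0}"
        using sub poly_roots_finite[OF fnz] by (intro card_mono) auto
      then have "k \<le> card {x. poly f x = 0}" using ck by simp
      moreover have "card {x. poly f x = 0} \<le> degree f" by (rule card_poly_roots_bound[OF fnz])
      moreover have "degree f \<le> k - 1" unfolding fH by (rule dHd)
      ultimately show False using k0 by simp
    qed
  qed
  show ?thesis
  proof (rule set_eqI, rule iffI)
    fix c assume c: "c \<in> tgrs_code n k l eta alpha v \<inter> dual_code n (tgrs_code n k l eta alpha v)"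
    then obtain fc where cf: "c = (\<lambda>i. if i \<in> {1..n} then v i * poly (Fp fc) (alpha i) else 0)"
      unfolding tgrs_code_def tp2 by blast
    have "\<forall>g\<in>tgrs_polys k l eta. (\<Sum>i=1..n. w i * poly (Fp fc) (alpha i) * poly g (alpha i)) = 0"
    proof
      fix g assume g: "g \<in> tgrs_polys k l eta"
      have "(\<lambda>i. if i \<in> {1..n} then v i * poly g (alpha i) else 0) \<in> tgrs_code n k l eta alpha v"
        unfolding tgrs_code_def using g by blast
      then have "(\<Sum>i=1..n. (if i \<in> {1..n} then v i * poly g (alpha i) else 0) * c i) = 0"
      proof -
        have cc: "\<forall>c'\<in>tgrs_code n k l eta alpha v. (\<Sum>i=1..n. c' i * c i) = 0"
          using c unfolding dual_code_def by blast
        show ?thesis using bspec[OF cc \<open>(\<lambda>i. if i \<in> {1..n} then v i * poly g (alpha i) else 0) \<in> tgrs_code n k l eta alpha v\<close>] by simp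
      qed
      moreover have "(\<Sum>i=1..n. (if i \<in> {1..n} then v i * poly g (alpha i) else 0) * c i)
          = (\<Sum>i=1..n. w i * poly (Fp fc) (alpha i) * poly g (alpha i))"
        unfolding cf w_def by (rule sum.cong) (simp_all add: algebra_simps)
      ultimately show "(\<Sum>i=1..n. w i * poly (Fp fc) (alpha i) * poly g (alpha i)) = 0" by simp
    qed
    then have F0: "Fp fc = 0" by (rule main)
    have "c = (\<lambda>i. 0)"
    proof
      fix i show "c i = 0" unfolding cf F0 by simp
    qed
    then show "c \<in> {\<lambda>i. 0}" by simp
  next
    fix c :: "nat \<Rightarrow> 'a" assume "c \<in> {\<lambda>i. 0}"
    then have c: "c = (\<lambda>i. 0)" by simp
    have "Fp (\<lambda>_. 0) = 0" unfolding Fp_def Hd_def by simp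
    then have "(0::'a poly) \<in> tgrs_polys k l eta" unfolding tp2 by (metis (mono_tags, lifting) mem_Collect_eq)
    then have "c \<in> tgrs_code n k l eta alpha v" unfolding tgrs_code_def c by force
    moreover have "c \<in> dual_code n (tgrs_code n k l eta alpha v)" unfolding dual_code_def c by simp
    ultimately show "c \<in> tgrs_code n k l eta alpha v \<inter> dual_code n (tgrs_code n k l eta alpha v)" by blast
  qed
qed

end
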